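(* Let $A$ be a nontrivial commutative group and $R$ a nonzero commutative ring. (a) If $A$ has an element of infinite order, then the augmentation ideal of $R[A]$ is not nilpotent. (b) The augmentation ideal of $\mathbb{Z}[A]$ is not nilpotent. (c) Let $m,N\ge2$. If there is a prime $p$ with $p\mid N$ and $p\nmid m$, and $A$ has an element of order $m$, then $\nu((\mathbb{Z}/N\mathbb{Z})[A])=\infty$. (d) If $A$ is finite, then $\nu(R[A])\ge\max(\exp(A),\operatorname{rank}(A))$.
   Context: For a commutative ring $R$ and commutative group $A$, the augmentation ideal $I$ of the group ring $R[A]$ is the kernel of $\sum r_a[a]\mapsto\sum r_a$; $\nu(R[A])$ is the least $n\in\mathbb N$ with $I^n=0$, or $\infty$ if none exists. For a finite commutative group $A$, $\exp(A)$ is its exponent and $\operatorname{rank}(A)$ is the least $n$ such that $A$ is a direct sum of $n$ cyclic groups. *)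

theory Defs
  imports "HOL-Library.Poly_Mapping" "HOL-Library.Extended_Nat"
    "HOL-Computational_Algebra.Primes" "Berlekamp_Zassenhaus.Finite_Field"
begin

text \<open>Commutative groups A are types of class ab_group_add (written additively).
 The group ring R[A] is the type poly_mapping from a to r of finitely supported functions
 A to R with the convolution product of HOL-Library.Poly_Mapping.\<close>

definition augmentation :: "('a \<Rightarrow>\<^sub>0 'r::comm_ring_1) \<Rightarrow> 'r" where
  "augmentation f = (\<Sum>a\<in>Poly_Mapping.keys f. Poly_Mapping.lookup f a)"

definition aug_ideal :: "('a::ab_group_add \<Rightarrow>\<^sub>0 'r::comm_ring_1) set" where
  "aug_ideal = {f. augmentation f = 0}"

definition ideal_pow :: "'b::comm_ring_1 set \<Rightarrow> nat \<Rightarrow> 'b set" where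
  "ideal_pow I n = (if n = 0 then UNIV else
     {sum_list (map prod_list xss) | xss. \<forall>xs\<in>set xss. length xs = n \<and> set xs \<subseteq> I})"

definition nilpotent_ideal :: "'b::comm_ring_1 set \<Rightarrow> bool" where
  "nilpotent_ideal I \<longleftrightarrow> (\<exists>n. ideal_pow I n = {0})"

definition nil_index :: "'b::comm_ring_1 set \<Rightarrow> enat" where
  "nil_index I = (if nilpotent_ideal I then enat (LEAST n. ideal_pow I n = {0}) else \<infinity>)"

primrec gmul :: "nat \<Rightarrow> 'a::ab_group_add \<Rightarrow> 'a" where
  "gmul 0 a = 0"
| "gmul (Suc k) a = a + gmul k a"

text \<open>order of an element; 0 encodes infinite order\<close>
definition elem_ord :: "'a::ab_group_add \<Rightarrow> nat" where
  "elem_ord a = (if \<exists>k>0. gmul k a = 0 then (LEAST k. k > 0 \<and> gmul k a = 0) else 0)"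

definition infinite_order :: "'a::ab_group_add \<Rightarrow> bool" where
  "infinite_order a \<longleftrightarrow> (\<forall>k>0. gmul k a \<noteq> 0)"

definition grp_exp :: "'a::ab_group_add itself \<Rightarrow> nat" where
  "grp_exp _ = (LEAST e. e > 0 \<and> (\<forall>a::'a. gmul e a = 0))"

text \<open>cyclic subgroup generated by g (for finite groups, nonnegative multiples suffice)\<close>
definition cyc :: "'a::ab_group_add \<Rightarrow> 'a set" where
  "cyc g = {gmul k g | k. True} \<union> {- gmul k g | k. True}"

definition direct_sum_cyclic :: "'a::ab_group_add itself \<Rightarrow> nat \<Rightarrow> bool" where
  "direct_sum_cyclic _ n \<longleftrightarrow> (\<exists>g :: nat \<Rightarrow> 'a.
      bij_betw (\<lambda>x. \<Sum>i<n. x i) (PiE {..<n} (\<lambda>i. cyc (g i))) (UNIV :: 'a set))"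

definition grp_rank :: "'a::ab_group_add itself \<Rightarrow> nat" where
  "grp_rank T = (LEAST n. direct_sum_cyclic T n)"

end

theory Submission
  imports Defs
begin


lemma gmul_add: "gmul (m + n) a = gmul m a + gmul n a"
  by (induction m) (auto simp: add.assoc)

lemma gmul_mult: "gmul (m * n) a = gmul m (gmul n a)"
  by (induction m) (auto simp: gmul_add)

lemma gmul_zero [simp]: "gmul n 0 = 0"
  by (induction n) auto

lemma gmul_one [simp]: "gmul (Suc 0) a = a"
  by simp

lemma gmul_distrib: "gmul n (a + b) = gmul n a + gmul n b"
  by (induction n) (auto simp: algebra_simps)

lemma gmul_minus: "gmul n (- a) = - gmul n a"
  by (induction n) (auto simp: algebra_simps)

lemma gmul_diff: "gmul n (a - b) = gmul n a - gmul n b"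
  using gmul_distrib[of n a "-b"] gmul_minus[of n b] by simp

lemma gmul_sum: "gmul n (sum f A) = sum (\<lambda>x. gmul n (f x)) A"
  by (induction A rule: infinite_finite_induct) (auto simp: gmul_distrib)

lemma gmul_cancel_diff: "m \<le> n \<Longrightarrow> gmul n a - gmul m a = gmul (n - m) a"
  using gmul_add[of "n-m" m a] by simp

section \<open>Order\<close>

lemma ex_order_finite:
  assumes fin: "finite (UNIV :: 'a::ab_group_add set)"
  shows "\<exists>k>0. gmul k (a::'a) = 0"
proof -
  have "\<not> inj (\<lambda>k::nat. gmul k a)"
    using fin finite_imageD infinite_UNIV_nat by (metis finite_subset subset_UNIV)
  then obtain i j where ij: "i \<noteq> j" "gmul i a = gmul j a" by (auto simp: inj_def)
  show ?thesis
  proof (cases "i < j")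
    case True
    then show ?thesis using ij gmul_cancel_diff[of i j a] by (intro exI[of _ "j - i"]) auto
  next
    case False
    then show ?thesis using ij gmul_cancel_diff[of j i a] by (intro exI[of _ "i - j"]) auto
  qed
qed

lemma gmul_mod:
  assumes "gmul k a = 0"
  shows "gmul n a = gmul (n mod k) a"
proof -
  have "n = n mod k + k * (n div k)" by simp
  then have "gmul n a = gmul (n mod k) a + gmul (k * (n div k)) a"
    by (metis gmul_add)
  also have "gmul (k * (n div k)) a = 0"
    by (simp add: mult.commute[of k] gmul_mult assms)
  finally show ?thesis by simp
qed

lemma elem_ord_props:
  assumes "\<exists>k>0. gmul k a = 0"
  shows "elem_ord a > 0" "gmul (elem_ord a) a = 0"
    "\<And>n. gmul n a = 0 \<longleftrightarrow> elem_ord a dvd n"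
proof -
  have eq: "elem_ord a = (LEAST k. k > 0 \<and> gmul k a = 0)"
    using assms by (simp add: elem_ord_def)
  from assms obtain k where "k > 0 \<and> gmul k a = 0" by blast
  then have L: "elem_ord a > 0 \<and> gmul (elem_ord a) a = 0"
    unfolding eq by (rule LeastI)
  then show "elem_ord a > 0" "gmul (elem_ord a) a = 0" by auto
  have min: "\<And>j. 0 < j \<Longrightarrow> j < elem_ord a \<Longrightarrow> gmul j a \<noteq> 0"
    unfolding eq using not_less_Least by blast
  fix n
  show "gmul n a = 0 \<longleftrightarrow> elem_ord a dvd n"
  proof
    assume "gmul n a = 0"
    then have "gmul (n mod elem_ord a) a = 0" using gmul_mod[of "elem_ord a" a n] L by simp
    then have "n mod elem_ord a = 0" using min[of "n mod elem_ord a"] L by (meson mod_less_divisor neq0_conv)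
    then show "elem_ord a dvd n" by auto
  next
    assume "elem_ord a dvd n"
    then obtain j where "n = elem_ord a * j" by auto
    then show "gmul n a = 0" using L by (simp add: mult.commute[of _ j] gmul_mult)
  qed
qed

lemma elem_ord_unique:
  assumes "\<And>n. gmul n a = 0 \<longleftrightarrow> d dvd n" "d > 0"
  shows "elem_ord a = d"
proof -
  have ex: "\<exists>k>0. gmul k a = 0" using assms by (intro exI[of _ d]) auto
  show ?thesis using elem_ord_props(3)[OF ex] assms by (meson dvd_antisym dvd_refl)
qed

lemma elem_ord_zero_iff: "elem_ord a = 1 \<longleftrightarrow> a = 0"
proof
  assume "elem_ord a = 1"
  then have "\<exists>k>0. gmul k a = 0" by (metis elem_ord_def zero_neq_one)
  from elem_ord_props(2)[OF this] \<open>elem_ord a = 1\<close> show "a = 0" by simp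
next
  assume "a = 0" then show "elem_ord a = 1" by (intro elem_ord_unique) auto
qed

lemma gmul_inj_below:
  assumes "\<exists>k>0. gmul k a = 0" "i < elem_ord a" "j < elem_ord a" "gmul i a = gmul j a"
  shows "i = j"
proof (rule ccontr)
  assume "i \<noteq> j"
  then consider "i < j" | "j < i" by linarith
  then show False
  proof cases
    case 1
    then have "gmul (j - i) a = 0" using gmul_cancel_diff[of i j a] assms by simp
    then have "elem_ord a dvd (j - i)" using elem_ord_props(3)[OF assms(1)] by simp
    then show False using 1 assms by (meson diff_le_self dvd_imp_le le_less_trans not_le zero_less_diff)
  next
    case 2
    then have "gmul (i - j) a = 0" using gmul_cancel_diff[of j i a] assms by simp
    then have "elem_ord a dvd (i - j)" using elem_ord_props(3)[OF assms(1)] by simp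
    then show False using 2 assms by (meson diff_le_self dvd_imp_le le_less_trans not_le zero_less_diff)
  qed
qed

lemma elem_ord_gmul_div:
  assumes ex: "\<exists>k>0. gmul k a = 0" and d: "d dvd elem_ord a"
  shows "elem_ord (gmul d a) = elem_ord a div d"
proof -
  obtain e where e: "elem_ord a = d * e" using d by auto
  have pos: "elem_ord a > 0" using elem_ord_props(1)[OF ex] .
  then have "d > 0" "e > 0" using e by auto
  show ?thesis
  proof (rule elem_ord_unique)
    fix n
    have "gmul n (gmul d a) = 0 \<longleftrightarrow> d * e dvd d * n"
      using elem_ord_props(3)[OF ex, of "d * n"] e gmul_mult[of n d a] by (simp add: mult.commute)
    also have "\<dots> \<longleftrightarrow> e dvd n" using \<open>d > 0\<close> by simp
    finally show "gmul n (gmul d a) = 0 \<longleftrightarrow> elem_ord a div d dvd n" using e \<open>d > 0\<close> by simp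
  next
    show "elem_ord a div d > 0" using e \<open>d > 0\<close> \<open>e > 0\<close> by simp
  qed
qed

section \<open>Finite groups\<close>

lemma fin_ord:
  assumes "finite (UNIV :: 'a::ab_group_add set)"
  shows "elem_ord (a::'a) > 0" "gmul (elem_ord a) a = 0"
    "\<And>n. gmul n a = 0 \<longleftrightarrow> elem_ord a dvd n"
  using elem_ord_props[OF ex_order_finite[OF assms]] by auto

lemma ord_add_coprime:
  assumes fin: "finite (UNIV :: 'a::ab_group_add set)"
    and cop: "coprime (elem_ord (x::'a)) (elem_ord y)"
  shows "elem_ord (x + y) = elem_ord x * elem_ord y"
proof (rule elem_ord_unique)
  note F = fin_ord[OF fin]
  fix n
  show "gmul n (x + y) = 0 \<longleftrightarrow> elem_ord x * elem_ord y dvd n"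
  proof
    assume A: "gmul n (x + y) = 0"
    define z where "z = gmul n x"
    have zy: "gmul n y = - z" using A unfolding z_def gmul_distrib
      by (simp add: eq_neg_iff_add_eq_0 add.commute)
    have "gmul (elem_ord x) z = 0"
      unfolding z_def gmul_mult[symmetric] by (simp add: F(3))
    then have d1: "elem_ord z dvd elem_ord x" using F(3) by blast
    have "gmul (elem_ord y) (gmul n y) = 0"
      unfolding gmul_mult[symmetric] by (simp add: F(3))
    then have "gmul (elem_ord y) z = 0" unfolding zy gmul_minus by simp
    then have d2: "elem_ord z dvd elem_ord y" using F(3) by blast
    have "elem_ord z = 1" using d1 d2 cop
      by (metis coprime_common_divisor_nat)
    then have "z = 0" using elem_ord_zero_iff[of z] by simp
    then have "gmul n x = 0" "gmul n y = 0" using zy z_def by auto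
    then have "elem_ord x dvd n" "elem_ord y dvd n" using F(3) by blast+
    then show "elem_ord x * elem_ord y dvd n" using cop by (simp add: divides_mult)
  next
    assume "elem_ord x * elem_ord y dvd n"
    then have "elem_ord x dvd n" "elem_ord y dvd n"
      using dvd_mult_left dvd_mult_right by blast+
    then show "gmul n (x + y) = 0" by (metis F(3) gmul_distrib add_0)
  qed
next
  show "elem_ord x * elem_ord y > 0" using fin_ord[OF fin] by simp
qed

definition sg :: "'a::ab_group_add set \<Rightarrow> bool" where
  "sg H \<longleftrightarrow> 0 \<in> H \<and> (\<forall>x\<in>H. \<forall>y\<in>H. x + y \<in> H)"

lemma sg_gmul: "sg H \<Longrightarrow> x \<in> H \<Longrightarrow> gmul n x \<in> H"
  by (induction n) (auto simp: sg_def)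

lemma sg_minus:
  assumes fin: "finite (UNIV :: 'a::ab_group_add set)" and "sg H" "(x::'a) \<in> H"
  shows "- x \<in> H"
proof -
  have "gmul (elem_ord x - 1) x + x = gmul (elem_ord x - 1 + 1) x"
    by (simp add: gmul_add)
  also have "\<dots> = 0" using fin_ord[OF fin, where a=x] by simp
  finally have "- x = gmul (elem_ord x - 1) x" by (simp add: neg_eq_iff_add_eq_0 add.commute)
  then show ?thesis using sg_gmul assms by metis
qed

lemma sg_diff:
  assumes fin: "finite (UNIV :: 'a::ab_group_add set)" and "sg H" "(x::'a) \<in> H" "y \<in> H"
  shows "x - y \<in> H"
  using sg_minus[OF fin assms(2,4)] assms(2,3) unfolding sg_def
  by (metis diff_conv_add_uminus)

lemma sg_sum: "sg H \<Longrightarrow> (\<And>i. i \<in> A \<Longrightarrow> f i \<in> H) \<Longrightarrow> sum f A \<in> H"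
  by (induction A rule: infinite_finite_induct) (auto simp: sg_def)

lemma max_ord_dvd:
  assumes fin: "finite (UNIV :: 'a::ab_group_add set)" and H: "sg H" and g: "(g::'a) \<in> H"
    and max: "\<And>x. x \<in> H \<Longrightarrow> elem_ord x \<le> elem_ord g" and x: "x \<in> H"
  shows "elem_ord x dvd elem_ord g"
proof (rule ccontr)
  note F = fin_ord[OF fin]
  assume nd: "\<not> elem_ord x dvd elem_ord g"
  define a where "a = elem_ord x"
  define m where "m = elem_ord g"
  have a0: "a \<noteq> 0" "m \<noteq> 0" using F(1) a_def m_def by (metis not_less0)+
  obtain q where q: "prime q" "multiplicity q a > multiplicity q m"
    using multiplicity_le_imp_dvd[OF a0(1), of m] nd a_def m_def by (meson not_le)
  define e where "e = multiplicity q a"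
  define f where "f = multiplicity q m"
  have qe: "q ^ e dvd a" unfolding e_def by (rule multiplicity_dvd)
  have qf: "q ^ f dvd m" unfolding f_def by (rule multiplicity_dvd)
  have ndq: "\<not> q dvd (m div q ^ f)" unfolding f_def
    by (rule multiplicity_decompose) (use a0 q prime_nat_iff in auto)
  define x' where "x' = gmul (a div q ^ e) x"
  define g' where "g' = gmul (q ^ f) g"
  have qpos: "q > 0" using q prime_gt_0_nat by blast
  have ox': "elem_ord x' = q ^ e"
  proof -
    have "a div q ^ e dvd a" using qe by (metis dvd_div_mult_self dvd_triv_left)
    then have "elem_ord x' = a div (a div q ^ e)"
      unfolding x'_def a_def by (rule elem_ord_gmul_div[OF ex_order_finite[OF fin]])
    also have "\<dots> = q ^ e" using qe a0 qpos
      by (auto elim!: dvdE)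
    finally show ?thesis .
  qed
  have og': "elem_ord g' = m div q ^ f"
    unfolding g'_def m_def by (rule elem_ord_gmul_div[OF ex_order_finite[OF fin]]) (use qf m_def in auto)
  have cop: "coprime (elem_ord x') (elem_ord g')"
    unfolding ox' og' using ndq q(1)
    by (metis coprime_power_left_iff prime_imp_coprime_nat)
  have "x' + g' \<in> H" using H x g sg_gmul unfolding x'_def g'_def sg_def by blast
  then have le: "elem_ord (x' + g') \<le> m" using max m_def by blast
  have eq: "elem_ord (x' + g') = q ^ e * (m div q ^ f)"
    using ord_add_coprime[OF fin cop] ox' og' by simp
  have "m = q ^ f * (m div q ^ f)" using qf by simp
  moreover have "q ^ f < q ^ e" using q e_def f_def qpos
    by (metis power_strict_increasing_iff prime_gt_1_nat)
  moreover have "m div q ^ f > 0" using qf a0 by (metis dvd_div_eq_0_iff not_gr0)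
  ultimately have "m < q ^ e * (m div q ^ f)" by (metis mult_less_cancel2)
  then show False using le eq by simp
qed

definition C :: "'a::ab_group_add \<Rightarrow> 'a set" where
  "C g = range (\<lambda>k. gmul k g)"

lemma sg_C: "sg (C g)"
  unfolding sg_def C_def
proof safe
  show "0 \<in> range (\<lambda>k. gmul k g)" by (rule range_eqI[of _ _ 0]) simp
  fix a b
  show "gmul a g + gmul b g \<in> range (\<lambda>k. gmul k g)" by (rule range_eqI[of _ _ "a + b"]) (simp add: gmul_add)
qed

lemma C_sub: "sg H \<Longrightarrow> g \<in> H \<Longrightarrow> C g \<subseteq> H"
  unfolding C_def using sg_gmul by blast

lemma sg_fin_finite: "finite (UNIV :: 'a set) \<Longrightarrow> finite (H :: 'a set)"
  by (rule finite_subset[OF subset_UNIV])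

lemma bezout_gmul:
  assumes fin: "finite (UNIV :: 'a::ab_group_add set)" and q: "prime q" and nd: "\<not> q dvd elem_ord (x::'a)"
  shows "\<exists>u. gmul u (gmul q x) = x"
proof -
  have "coprime q (elem_ord x)" using q nd by (simp add: prime_imp_coprime_nat)
  then have g1: "gcd q (elem_ord x) = 1" by simp
  have "q \<noteq> 0" using q by auto
  then obtain u v where uv: "q * u = elem_ord x * v + gcd q (elem_ord x)"
    using bezout_nat by blast
  have "gmul u (gmul q x) = gmul (q * u) x" by (simp add: gmul_mult[symmetric] mult.commute)
  also have "\<dots> = gmul (elem_ord x * v) x + x" using uv g1 by (simp add: gmul_add)
  also have "gmul (elem_ord x * v) x = 0" using fin_ord(2)[OF fin, where a=x] by (simp add: gmul_mult mult.commute[of _ v])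
  finally show ?thesis by auto
qed



lemma gmul_comm: "gmul m (gmul n a) = gmul n (gmul m a)"
  by (metis gmul_mult mult.commute)

lemma complement:
  assumes fin: "finite (UNIV :: 'a::ab_group_add set)" and H: "sg H" and g: "(g::'a) \<in> H"
    and max: "\<And>x. x \<in> H \<Longrightarrow> elem_ord x \<le> elem_ord g"
  shows "\<exists>K. sg K \<and> K \<subseteq> H \<and> (\<forall>x\<in>K. x \<in> C g \<longrightarrow> x = 0) \<and> (\<forall>h\<in>H. \<exists>c k. k \<in> K \<and> h = gmul c g + k)"
proof -
  define m where "m = elem_ord g"
  note F = fin_ord[OF fin]
  have expo: "\<And>x. x \<in> H \<Longrightarrow> gmul m x = 0"
    using max_ord_dvd[OF fin H g max] F(3) m_def by blast
  define Fam where "Fam = {K. sg K \<and> K \<subseteq> H \<and> (\<forall>x\<in>K. x \<in> C g \<longrightarrow> x = 0)}"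
  have "{0} \<in> Fam" unfolding Fam_def sg_def using H by (auto simp: sg_def)
  have "finite (Pow (UNIV :: 'a set))" using finite_Pow_iff[THEN iffD2, OF fin] .
  then have finFam: "finite Fam" by (rule finite_subset[rotated]) auto
  have fc: "finite (card ` Fam)" "card ` Fam \<noteq> {}" using finFam \<open>{0} \<in> Fam\<close> by auto
  have "Max (card ` Fam) \<in> card ` Fam" by (rule Max_in[OF fc])
  then obtain K where K: "K \<in> Fam" "card K = Max (card ` Fam)" by auto
  have Kmax: "\<And>K'. K' \<in> Fam \<Longrightarrow> card K' \<le> card K"
    using K(2) \<open>finite (card ` Fam)\<close> by simp
  have sgK: "sg K" and KH: "K \<subseteq> H" and Kg: "\<And>x. x \<in> K \<Longrightarrow> x \<in> C g \<Longrightarrow> x = 0"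
    using K(1) unfolding Fam_def by auto
  define S where "S = {gmul c g + k | c k. k \<in> K}"
  have sgS: "sg S" unfolding sg_def S_def
  proof safe
    show "\<exists>c k. 0 = gmul c g + k \<and> k \<in> K" using sgK by (intro exI[of _ 0] exI[of _ 0]) (auto simp: sg_def)
    fix c1 k1 c2 k2 assume "k1 \<in> K" "k2 \<in> K"
    then show "\<exists>c k. gmul c1 g + k1 + (gmul c2 g + k2) = gmul c g + k \<and> k \<in> K"
      using sgK by (intro exI[of _ "c1 + c2"] exI[of _ "k1 + k2"]) (auto simp: sg_def gmul_add algebra_simps)
  qed
  have KS: "K \<subseteq> S"
  proof
    fix x assume "x \<in> K"
    then have "x = gmul 0 g + x \<and> x \<in> K" by simp
    then show "x \<in> S" unfolding S_def by blast
  qed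
  have SH: "S \<subseteq> H" unfolding S_def using KH H sg_gmul[OF H g] unfolding sg_def by blast
  have gS: "\<And>c. gmul c g \<in> S"
  proof -
    fix c
    have "gmul c g = gmul c g + 0 \<and> (0::'a) \<in> K" using sgK by (simp add: sg_def)
    then show "gmul c g \<in> S" unfolding S_def by blast
  qed
  have closed: "\<And>x y. x \<in> S \<Longrightarrow> y \<in> S \<Longrightarrow> x - y \<in> S" "\<And>n x. x \<in> S \<Longrightarrow> gmul n x \<in> S"
    using sg_diff[OF fin sgS] sg_gmul[OF sgS] by auto
  have main: False if h': "h' \<in> H" "h' \<notin> S" and q: "prime q" and hq: "gmul q h' \<in> S" for h' q
  proof (cases "q dvd m")
    case False
    have "elem_ord h' dvd m" using max_ord_dvd[OF fin H g max h'(1)] m_def by simp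
    then have "\<not> q dvd elem_ord h'" using False by (meson dvd_trans)
    then obtain u where "gmul u (gmul q h') = h'" using bezout_gmul[OF fin q] by blast
    then have "h' \<in> S" using closed(2)[OF hq, of u] by simp
    then show False using h' by simp
  next
    case True
    then obtain m' where m': "m = q * m'" by auto
    have m'0: "m' > 0" using m' F(1)[of g] m_def by (metis gr0I mult_0_right)
    from hq obtain s k0 where sk: "gmul q h' = gmul s g + k0" "k0 \<in> K" unfolding S_def by blast
    have "gmul m' (gmul q h') = 0"
      using expo[OF h'(1)] m' by (simp add: gmul_mult[symmetric] mult.commute)
    then have "gmul (m' * s) g + gmul m' k0 = 0" using sk by (simp add: gmul_distrib gmul_mult)
    then have "gmul (m' * s) g = - gmul m' k0" by (simp add: eq_neg_iff_add_eq_0)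
    moreover have "- gmul m' k0 \<in> K" using sg_minus[OF fin sgK sg_gmul[OF sgK sk(2)]] .
    ultimately have "gmul (m' * s) g = 0" using Kg unfolding C_def by (metis rangeI)
    then have "m dvd m' * s" using F(3) m_def by blast
    then have "q dvd s" using m' m'0 by (simp add: mult.commute)
    then obtain s' where s': "s = q * s'" by auto
    define h'' where "h'' = h' - gmul s' g"
    have h''H: "h'' \<in> H" unfolding h''_def using sg_diff[OF fin H h'(1) sg_gmul[OF H g]] .
    have qh'': "gmul q h'' = k0"
      unfolding h''_def gmul_diff using sk s' by (simp add: gmul_mult)
    have h''S: "h'' \<notin> S"
    proof
      assume "h'' \<in> S"
      then have "h'' + gmul s' g \<in> S" using sgS gS unfolding sg_def by blast
      then show False using h' unfolding h''_def by simp
    qed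
    define K' where "K' = {gmul j h'' + k | j k. k \<in> K}"
    have "K' \<in> Fam" unfolding Fam_def
    proof (intro CollectI conjI)
      show "sg K'" unfolding sg_def K'_def
      proof safe
        show "\<exists>j k. 0 = gmul j h'' + k \<and> k \<in> K" using sgK by (intro exI[of _ 0] exI[of _ 0]) (auto simp: sg_def)
        fix c1 k1 c2 k2 assume "k1 \<in> K" "k2 \<in> K"
        then show "\<exists>c k. gmul c1 h'' + k1 + (gmul c2 h'' + k2) = gmul c h'' + k \<and> k \<in> K"
          using sgK by (intro exI[of _ "c1 + c2"] exI[of _ "k1 + k2"]) (auto simp: sg_def gmul_add algebra_simps)
      qed
      show "K' \<subseteq> H" unfolding K'_def using KH H sg_gmul[OF H h''H] unfolding sg_def by blast
      show "\<forall>x\<in>K'. x \<in> C g \<longrightarrow> x = 0"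
      proof (intro ballI impI)
        fix x assume "x \<in> K'" "x \<in> C g"
        then obtain j k r where x: "x = gmul j h'' + k" "k \<in> K" "x = gmul r g"
          unfolding K'_def C_def by blast
        show "x = 0"
        proof (cases "q dvd j")
          case True
          then obtain j' where "j = q * j'" by auto
          then have "gmul j h'' = gmul j' k0" using qh'' by (simp add: mult.commute gmul_mult)
          then have "x \<in> K" using x sgK sg_gmul[OF sgK sk(2)] by (simp add: sg_def)
          then show ?thesis using Kg x unfolding C_def by blast
        next
          case False
          then have "j \<noteq> 0" by (metis dvd_0_right)
          then obtain u v where uv: "j * u = q * v + gcd j q" using bezout_nat by blast
          have "gcd j q = 1" using False q
            by (metis coprime_commute coprime_iff_gcd_eq_1 prime_imp_coprime_nat)
          then have "gmul (j * u) h'' = gmul v k0 + h''"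
            using uv qh'' by (simp add: gmul_add gmul_mult gmul_comm[of q v])
          moreover have "gmul (j * u) h'' = gmul u (gmul j h'')"
            by (simp add: gmul_mult[symmetric] mult.commute)
          ultimately have "h'' = gmul u (gmul j h'') - gmul v k0"
            by (simp add: algebra_simps)
          also have "gmul j h'' = gmul r g - k" using x by (simp add: algebra_simps)
          finally have "h'' = gmul u (gmul r g - k) - gmul v k0" .
          moreover have "gmul u (gmul r g - k) - gmul v k0 \<in> S"
          proof -
            have "gmul r g - k \<in> S" using closed(1)[OF gS] KS x(2) by blast
            then have "gmul u (gmul r g - k) \<in> S" by (rule closed(2))
            moreover have "gmul v k0 \<in> S" using closed(2) KS sk(2) by blast
            ultimately show ?thesis by (rule closed(1))
          qed
          ultimately show ?thesis using h''S by simp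
        qed
      qed
    qed
    moreover have "K \<subset> K'"
    proof
      show "K \<subseteq> K'"
      proof
        fix x assume "x \<in> K"
        then have "x = gmul 0 h'' + x \<and> x \<in> K" by simp
        then show "x \<in> K'" unfolding K'_def by blast
      qed
      have "h'' = gmul 1 h'' + 0 \<and> (0::'a) \<in> K" using sgK by (simp add: sg_def)
      then have "h'' \<in> K'" unfolding K'_def by blast
      moreover have "h'' \<notin> K" using h''S KS by blast
      ultimately show "K \<noteq> K'" by blast
    qed
    then have "card K < card K'" by (rule psubset_card_mono[OF sg_fin_finite[OF fin]])
    moreover have "card K' \<le> card K" by (rule Kmax) fact
    ultimately show False by simp
  qed
  have span: "\<forall>h\<in>H. h \<in> S"
  proof (rule ccontr)
    assume "\<not> (\<forall>h\<in>H. h \<in> S)"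
    then obtain h where h: "h \<in> H" "h \<notin> S" by blast
    have ex: "\<exists>t. t > 0 \<and> gmul t h \<in> S"
      using F(1)[of h] F(2)[of h] sgS by (auto simp: sg_def)
    define t where "t = (LEAST t. t > 0 \<and> gmul t h \<in> S)"
    have t: "t > 0" "gmul t h \<in> S" using LeastI_ex[OF ex] unfolding t_def by auto
    have tmin: "\<And>j. 0 < j \<Longrightarrow> j < t \<Longrightarrow> gmul j h \<notin> S"
      unfolding t_def using not_less_Least by blast
    have "t \<noteq> 1" using t h by auto
    then obtain q where q: "prime q" "q dvd t" using prime_factor_nat by blast
    define h' where "h' = gmul (t div q) h"
    have "t div q > 0" using q t by (metis dvd_div_eq_0_iff gr0I)
    moreover have "t div q < t" using q(1) t(1) by (metis div_less_dividend prime_gt_1_nat)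
    ultimately have "h' \<notin> S" using tmin h'_def by blast
    moreover have "h' \<in> H" unfolding h'_def using sg_gmul[OF H h(1)] .
    moreover have "gmul q h' \<in> S" unfolding h'_def using q t by (simp add: gmul_mult[symmetric])
    ultimately show False using main q by blast
  qed
  have "\<forall>h\<in>H. \<exists>c k. k \<in> K \<and> h = gmul c g + k"
  proof
    fix h assume "h \<in> H"
    then have "h \<in> S" using span by blast
    then obtain c k where "h = gmul c g + k" "k \<in> K" unfolding S_def by blast
    then show "\<exists>c k. k \<in> K \<and> h = gmul c g + k" by blast
  qed
  then show ?thesis using sgK KH Kg by blast
qed


definition dsum :: "'a::ab_group_add set \<Rightarrow> nat \<Rightarrow> (nat \<Rightarrow> 'a) \<Rightarrow> bool" where
  "dsum H k g \<longleftrightarrow> (\<forall>i<k. g i \<in> H \<and> g i \<noteq> 0)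
     \<and> (\<forall>x. (\<forall>i<k. x i \<in> C (g i)) \<longrightarrow> (\<Sum>i<k. x i) = 0 \<longrightarrow> (\<forall>i<k. x i = 0))
     \<and> (\<forall>h\<in>H. \<exists>x. (\<forall>i<k. x i \<in> C (g i)) \<and> h = (\<Sum>i<k. x i))"

lemma structure_thm:
  assumes fin: "finite (UNIV :: 'a::ab_group_add set)"
  shows "sg (H::'a set) \<Longrightarrow> \<exists>k g. dsum H k g"
proof (induction "card H" arbitrary: H rule: less_induct)
  case less
  note H = less.prems
  show ?case
  proof (cases "H = {0}")
    case True
    then have "dsum H 0 g" for g unfolding dsum_def by auto
    then show ?thesis by blast
  next
    case False
    have finH: "finite H" by (rule sg_fin_finite[OF fin])
    have "H \<noteq> {}" using H by (auto simp: sg_def)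
    then have "finite (elem_ord ` H)" "elem_ord ` H \<noteq> {}" using finH by auto
    then have "Max (elem_ord ` H) \<in> elem_ord ` H" by (rule Max_in)
    then obtain g where g: "g \<in> H" "elem_ord g = Max (elem_ord ` H)" by auto
    have gmax: "\<And>x. x \<in> H \<Longrightarrow> elem_ord x \<le> elem_ord g"
      using g(2) finH by simp
    obtain y where y: "y \<in> H" "y \<noteq> 0" using False H by (auto simp: sg_def)
    have "elem_ord y \<noteq> 1" using y elem_ord_zero_iff by blast
    then have "elem_ord y \<ge> 2" using fin_ord(1)[OF fin, where a=y] by linarith
    then have "elem_ord g \<ge> 2" using gmax[OF y(1)] by linarith
    then have g0: "g \<noteq> 0" using elem_ord_zero_iff[of g] by auto
    obtain K where K: "sg K" "K \<subseteq> H" "\<And>x. x \<in> K \<Longrightarrow> x \<in> C g \<Longrightarrow> x = 0"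
      "\<And>h. h \<in> H \<Longrightarrow> \<exists>c k. k \<in> K \<and> h = gmul c g + k"
      using complement[OF fin H g(1) gmax] by blast
    have gC: "g \<in> C g" unfolding C_def by (rule range_eqI[of _ _ 1]) simp
    have "g \<notin> K" using K(3) gC g0 by blast
    then have "K \<subset> H" using K(2) g(1) by blast
    then have "card K < card H" by (rule psubset_card_mono[OF finH])
    then obtain k h where dK: "dsum K k h" using less.hyps K(1) by blast
    define g' where "g' = h(k := g)"
    have g'lt: "\<And>i. i < k \<Longrightarrow> g' i = h i" unfolding g'_def by simp
    have g'k: "g' k = g" unfolding g'_def by simp
    have hK: "\<And>i. i < k \<Longrightarrow> h i \<in> K" and h0: "\<And>i. i < k \<Longrightarrow> h i \<noteq> 0"
      using dK unfolding dsum_def by auto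
    have indK: "\<And>x. (\<forall>i<k. x i \<in> C (h i)) \<Longrightarrow> (\<Sum>i<k. x i) = 0 \<Longrightarrow> (\<forall>i<k. x i = 0)"
      using dK unfolding dsum_def by blast
    have spK: "\<And>z. z \<in> K \<Longrightarrow> \<exists>x. (\<forall>i<k. x i \<in> C (h i)) \<and> z = (\<Sum>i<k. x i)"
      using dK unfolding dsum_def by blast
    have "dsum H (Suc k) g'"
      unfolding dsum_def
    proof (intro conjI)
      show "\<forall>i<Suc k. g' i \<in> H \<and> g' i \<noteq> 0"
      proof (intro allI impI)
      fix i assume "i < Suc k"
      then consider "i < k" | "i = k" by linarith
      then show "g' i \<in> H \<and> g' i \<noteq> 0"
      proof cases
        case 1 then show ?thesis using g'lt[OF 1] hK[OF 1] h0[OF 1] K(2) by auto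
      next
        case 2 then show ?thesis using g'k g(1) g0 by simp
      qed
      qed
    next
      show "\<forall>x. (\<forall>i<Suc k. x i \<in> C (g' i)) \<longrightarrow> (\<Sum>i<Suc k. x i) = 0 \<longrightarrow> (\<forall>i<Suc k. x i = 0)"
      proof (rule allI, intro impI)
      fix x assume xC: "\<forall>i<Suc k. x i \<in> C (g' i)" and xs: "(\<Sum>i<Suc k. x i) = 0"
      have xCk: "\<forall>i<k. x i \<in> C (h i)" using xC g'lt by (metis less_SucI)
      have bK: "(\<Sum>i<k. x i) \<in> K"
      proof (rule sg_sum[OF K(1)])
        fix i assume "i \<in> {..<k}"
        then have "i < k" by simp
        then show "x i \<in> K" using xCk C_sub[OF K(1) hK[OF \<open>i < k\<close>]] by blast
      qed
      have xk: "x k \<in> C g" using xC g'k by auto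
      have "x k = - (\<Sum>i<k. x i)" using xs by (simp add: eq_neg_iff_add_eq_0 add.commute)
      then have "x k \<in> K" using sg_minus[OF fin K(1) bK] by simp
      then have xk0: "x k = 0" using K(3) xk by blast
      then have "(\<Sum>i<k. x i) = 0" using xs by simp
      then have "\<forall>i<k. x i = 0" using indK xCk by blast
      then show "\<forall>i<Suc k. x i = 0" using xk0 by (auto simp: less_Suc_eq)
      qed
    next
      show "\<forall>z\<in>H. \<exists>x. (\<forall>i<Suc k. x i \<in> C (g' i)) \<and> z = (\<Sum>i<Suc k. x i)"
      proof
      fix z assume "z \<in> H"
      then obtain c w where cw: "w \<in> K" "z = gmul c g + w" using K(4) by blast
      obtain x where x: "\<forall>i<k. x i \<in> C (h i)" "w = (\<Sum>i<k. x i)" using spK[OF cw(1)] by blast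
      define x' where "x' = x(k := gmul c g)"
      have "\<forall>i<Suc k. x' i \<in> C (g' i)"
      proof (intro allI impI)
        fix i assume "i < Suc k"
        then consider "i < k" | "i = k" by linarith
        then show "x' i \<in> C (g' i)"
        proof cases
          case 1 then show ?thesis using x(1) g'lt[OF 1] unfolding x'_def by simp
        next
          case 2 then show ?thesis using g'k unfolding x'_def C_def by simp
        qed
      qed
      moreover have "(\<Sum>i<k. x' i) = (\<Sum>i<k. x i)"
        unfolding x'_def by (rule sum.cong) auto
      then have "z = (\<Sum>i<Suc k. x' i)"
        using cw x(2) by (simp add: x'_def add.commute)
      ultimately show "\<exists>x. (\<forall>i<Suc k. x i \<in> C (g' i)) \<and> z = (\<Sum>i<Suc k. x i)" by blast
      qed
    qed
    then show ?thesis by blast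
  qed
qed



lemma lookup_mult_single:
  fixes f :: "'a::ab_group_add \<Rightarrow>\<^sub>0 'r::comm_ring_1"
  shows "Poly_Mapping.lookup (f * Poly_Mapping.single a 1) b = Poly_Mapping.lookup f (b - a)"
proof -
  have "Poly_Mapping.lookup (f * Poly_Mapping.single a 1) b = (\<Sum>l. Poly_Mapping.lookup f l * (\<Sum>q. Poly_Mapping.lookup (Poly_Mapping.single a 1) q when b = l + q))"
    by (rule lookup_mult)
  also have "\<dots> = (\<Sum>l. Poly_Mapping.lookup f l * (1 when b = l + a))"
  proof (rule Sum_any.cong)
    fix l
    have "(\<Sum>q. Poly_Mapping.lookup (Poly_Mapping.single a (1::'r)) q when b = l + q) = (\<Sum>q. (1 when b = l + a) when q = a)"
      by (rule Sum_any.cong) (auto simp: lookup_single when_def)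
    also have "\<dots> = (1 when b = l + a)" by simp
    finally show "Poly_Mapping.lookup f l * (\<Sum>q. Poly_Mapping.lookup (Poly_Mapping.single a 1) q when b = l + q) = Poly_Mapping.lookup f l * (1 when b = l + a)"
      by simp
  qed
  also have "\<dots> = (\<Sum>l. Poly_Mapping.lookup f (b - a) when l = b - a)"
    by (rule Sum_any.cong) (auto simp: when_def algebra_simps)
  also have "\<dots> = Poly_Mapping.lookup f (b - a)" by simp
  finally show ?thesis .
qed

lemma aug_eq:
  fixes f :: "'a \<Rightarrow>\<^sub>0 'r::comm_ring_1"
  assumes "finite S" "Poly_Mapping.keys f \<subseteq> S"
  shows "augmentation f = (\<Sum>a\<in>S. Poly_Mapping.lookup f a)"
  unfolding augmentation_def
  by (rule sum.mono_neutral_left[OF assms(1,2)]) (auto simp: in_keys_iff)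

lemma aug_add: "augmentation (f + g) = augmentation f + augmentation (g :: 'a \<Rightarrow>\<^sub>0 'r::comm_ring_1)"
proof -
  let ?S = "Poly_Mapping.keys f \<union> Poly_Mapping.keys g"
  have "Poly_Mapping.keys (f + g) \<subseteq> ?S" by (rule keys_add)
  then have "augmentation (f + g) = (\<Sum>a\<in>?S. Poly_Mapping.lookup (f + g) a)" by (intro aug_eq) auto
  also have "\<dots> = (\<Sum>a\<in>?S. Poly_Mapping.lookup f a) + (\<Sum>a\<in>?S. Poly_Mapping.lookup g a)" by (simp add: lookup_add sum.distrib)
  also have "(\<Sum>a\<in>?S. Poly_Mapping.lookup f a) = augmentation f" by (rule aug_eq[symmetric]) auto
  also have "(\<Sum>a\<in>?S. Poly_Mapping.lookup g a) = augmentation g" by (rule aug_eq[symmetric]) auto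
  finally show ?thesis .
qed

lemma aug_single: "augmentation (Poly_Mapping.single a c :: 'a \<Rightarrow>\<^sub>0 'r::comm_ring_1) = c"
  by (subst aug_eq[of "{a}"]) auto

lemma aug_zero: "augmentation (0 :: 'a \<Rightarrow>\<^sub>0 'r::comm_ring_1) = 0"
  by (simp add: augmentation_def)

lemma aug_uminus: "augmentation (- f) = - augmentation (f :: 'a \<Rightarrow>\<^sub>0 'r::comm_ring_1)"
  using aug_add[of f "- f"] by (simp add: aug_zero eq_neg_iff_add_eq_0 add.commute)

lemma aug_diff: "augmentation (f - g) = augmentation f - augmentation (g :: 'a \<Rightarrow>\<^sub>0 'r::comm_ring_1)"
  using aug_add[of f "- g"] aug_uminus[of g] by simp

lemma aug_sum: "augmentation (sum f A) = (\<Sum>x\<in>A. augmentation (f x :: 'a \<Rightarrow>\<^sub>0 'r::comm_ring_1))"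
  by (induction A rule: infinite_finite_induct) (auto simp: aug_zero aug_add)

lemma aug_one: "augmentation (1 :: 'a::ab_group_add \<Rightarrow>\<^sub>0 'r::comm_ring_1) = 1"
  by (metis aug_single single_one)

lemma aug_of_nat: "augmentation (of_nat n :: 'a::ab_group_add \<Rightarrow>\<^sub>0 'r::comm_ring_1) = of_nat n"
  by (metis single_of_nat aug_single)

lemma pow_in_ideal_pow: "x \<in> I \<Longrightarrow> n > 0 \<Longrightarrow> x ^ n \<in> ideal_pow I n"
  unfolding ideal_pow_def
  by (auto intro!: exI[of _ "[replicate n x]"] simp: prod_list_replicate)

lemma not_nilpotent_if:
  assumes "\<And>n. n > 0 \<Longrightarrow> \<exists>x\<in>I. x ^ n \<noteq> (0::'b::comm_ring_1)"
  shows "\<not> nilpotent_ideal I"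
  unfolding nilpotent_ideal_def
proof
  assume "\<exists>n. ideal_pow I n = {0}"
  then obtain n where n: "ideal_pow I n = {0}" by blast
  show False
  proof (cases "n = 0")
    case True
    then have "(1::'b) \<in> ideal_pow I n" by (simp add: ideal_pow_def)
    then show False using n by simp
  next
    case False
    then obtain x where "x \<in> I" "x ^ n \<noteq> 0" using assms by blast
    then show False using pow_in_ideal_pow[of x I n] n False by auto
  qed
qed


lemma lookup_one': "Poly_Mapping.lookup (1 :: 'a::monoid_add \<Rightarrow>\<^sub>0 'r::comm_ring_1) b = (if b = 0 then 1 else 0)"
  by (metis lookup_single single_one when_def)

lemma lookup_step:
  fixes f :: "'a::ab_group_add \<Rightarrow>\<^sub>0 'r::comm_ring_1"
  shows "Poly_Mapping.lookup (f * (Poly_Mapping.single g 1 - 1)) b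
     = Poly_Mapping.lookup f (b - g) - Poly_Mapping.lookup f b"
  by (simp add: right_diff_distrib lookup_minus lookup_mult_single)

lemma pow_X_minus_1:
  fixes g :: "'a::ab_group_add"
  assumes inj: "inj_on (\<lambda>k. gmul k g) {..N}"
  shows "n \<le> N \<Longrightarrow> (\<forall>b. Poly_Mapping.lookup ((Poly_Mapping.single g (1::'r::comm_ring_1) - 1) ^ n) b \<noteq> 0 \<longrightarrow> (\<exists>k\<le>n. b = gmul k g))
     \<and> Poly_Mapping.lookup ((Poly_Mapping.single g (1::'r) - 1) ^ n) (gmul n g) = 1"
proof (induction n)
  case 0
  then show ?case by (auto simp: lookup_one')
next
  case (Suc n)
  let ?P = "Poly_Mapping.single g (1::'r) - 1"
  have IH1: "\<And>b. Poly_Mapping.lookup (?P ^ n) b \<noteq> 0 \<Longrightarrow> \<exists>k\<le>n. b = gmul k g"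
    and IH2: "Poly_Mapping.lookup (?P ^ n) (gmul n g) = 1" using Suc by auto
  have L: "Poly_Mapping.lookup (?P ^ Suc n) b = Poly_Mapping.lookup (?P ^ n) (b - g) - Poly_Mapping.lookup (?P ^ n) b" for b
    by (simp add: power_Suc2 lookup_step del: power_Suc)
  show ?case
  proof (intro conjI allI impI)
    fix b assume "Poly_Mapping.lookup (?P ^ Suc n) b \<noteq> 0"
    then have "Poly_Mapping.lookup (?P ^ n) (b - g) \<noteq> 0 \<or> Poly_Mapping.lookup (?P ^ n) b \<noteq> 0"
      unfolding L by auto
    then show "\<exists>k\<le>Suc n. b = gmul k g"
    proof
      assume "Poly_Mapping.lookup (?P ^ n) (b - g) \<noteq> 0"
      then obtain k where "k \<le> n" "b - g = gmul k g" using IH1 by blast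
      then have "Suc k \<le> Suc n" "b = gmul (Suc k) g" by (auto simp: algebra_simps)
      then show ?thesis by blast
    next
      assume "Poly_Mapping.lookup (?P ^ n) b \<noteq> 0"
      then obtain k where "k \<le> n" "b = gmul k g" using IH1 by blast
      then show ?thesis by (intro exI[of _ k]) auto
    qed
  next
    have "Poly_Mapping.lookup (?P ^ n) (gmul (Suc n) g) = 0"
    proof (rule ccontr)
      assume "Poly_Mapping.lookup (?P ^ n) (gmul (Suc n) g) \<noteq> 0"
      then obtain k where "k \<le> n" "gmul (Suc n) g = gmul k g" using IH1 by blast
      then have "Suc n = k" using inj Suc.prems unfolding inj_on_def by (metis atMost_iff le_SucI le_trans)
      then show False using \<open>k \<le> n\<close> by simp
    qed
    moreover have "gmul (Suc n) g - g = gmul n g" by simp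
    ultimately show "Poly_Mapping.lookup (?P ^ Suc n) (gmul (Suc n) g) = 1"
      unfolding L using IH2 by simp
  qed
qed


lemma prod_X_minus_1:
  fixes g :: "nat \<Rightarrow> 'a::ab_group_add"
  assumes inj: "inj_on (\<lambda>S. \<Sum>i\<in>S. g i) (Pow {..<N})"
  shows "j \<le> N \<Longrightarrow> (\<forall>b. Poly_Mapping.lookup (\<Prod>i<j. Poly_Mapping.single (g i) (1::'r::comm_ring_1) - 1) b \<noteq> 0
        \<longrightarrow> (\<exists>S\<subseteq>{..<j}. b = (\<Sum>i\<in>S. g i)))
     \<and> Poly_Mapping.lookup (\<Prod>i<j. Poly_Mapping.single (g i) (1::'r) - 1) (\<Sum>i<j. g i) = 1"
proof (induction j)
  case 0
  then show ?case by (auto simp: lookup_one')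
next
  case (Suc j)
  let ?Q = "\<lambda>j. (\<Prod>i<j. Poly_Mapping.single (g i) (1::'r) - 1)"
  have IH1: "\<And>b. Poly_Mapping.lookup (?Q j) b \<noteq> 0 \<Longrightarrow> \<exists>S\<subseteq>{..<j}. b = (\<Sum>i\<in>S. g i)"
    and IH2: "Poly_Mapping.lookup (?Q j) (\<Sum>i<j. g i) = 1" using Suc by auto
  have L: "Poly_Mapping.lookup (?Q (Suc j)) b = Poly_Mapping.lookup (?Q j) (b - g j) - Poly_Mapping.lookup (?Q j) b" for b
    by (simp add: lookup_step)
  show ?case
  proof (intro conjI allI impI)
    fix b assume "Poly_Mapping.lookup (?Q (Suc j)) b \<noteq> 0"
    then have "Poly_Mapping.lookup (?Q j) (b - g j) \<noteq> 0 \<or> Poly_Mapping.lookup (?Q j) b \<noteq> 0"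
      unfolding L by auto
    then show "\<exists>S\<subseteq>{..<Suc j}. b = (\<Sum>i\<in>S. g i)"
    proof
      assume "Poly_Mapping.lookup (?Q j) (b - g j) \<noteq> 0"
      then obtain S where S: "S \<subseteq> {..<j}" "b - g j = (\<Sum>i\<in>S. g i)" using IH1 by blast
      have "j \<notin> S" "finite S" using S(1) finite_subset by auto
      then have "(\<Sum>i\<in>insert j S. g i) = g j + (\<Sum>i\<in>S. g i)" by simp
      then have "b = (\<Sum>i\<in>insert j S. g i)" using S(2) by (simp add: algebra_simps)
      moreover have "insert j S \<subseteq> {..<Suc j}" using S(1) by auto
      ultimately show ?thesis by blast
    next
      assume "Poly_Mapping.lookup (?Q j) b \<noteq> 0"
      then obtain S where "S \<subseteq> {..<j}" "b = (\<Sum>i\<in>S. g i)" using IH1 by blast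
      moreover have "S \<subseteq> {..<Suc j}" using calculation(1) by auto
      ultimately show ?thesis by blast
    qed
  next
    have "Poly_Mapping.lookup (?Q j) (\<Sum>i<Suc j. g i) = 0"
    proof (rule ccontr)
      assume "Poly_Mapping.lookup (?Q j) (\<Sum>i<Suc j. g i) \<noteq> 0"
      then obtain S where S: "S \<subseteq> {..<j}" "(\<Sum>i<Suc j. g i) = (\<Sum>i\<in>S. g i)" using IH1 by blast
      have "S \<in> Pow {..<N}" "{..<Suc j} \<in> Pow {..<N}" using S(1) Suc.prems by auto
      then have "{..<Suc j} = S" using inj S(2) unfolding inj_on_def by blast
      then show False using S(1) by auto
    qed
    moreover have "(\<Sum>i<Suc j. g i) - g j = (\<Sum>i<j. g i)" by simp
    ultimately show "Poly_Mapping.lookup (?Q (Suc j)) (\<Sum>i<Suc j. g i) = 1"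
      unfolding L using IH2 by simp
  qed
qed

lemma prod_in_ideal_pow:
  assumes "\<And>i. i < j \<Longrightarrow> f i \<in> I" "j > 0"
  shows "(\<Prod>i<j. f i) \<in> ideal_pow I j"
proof -
  have "(\<Prod>i<j. f i) = prod_list (map f [0..<j])"
    by (metis atLeast_upt distinct_upt prod.distinct_set_conv_list)
  then have "(\<Prod>i<j. f i) = sum_list (map prod_list [map f [0..<j]])" by simp
  moreover have "\<forall>xs\<in>set [map f [0..<j]]. length xs = j \<and> set xs \<subseteq> I" using assms(1) by auto
  moreover have "ideal_pow I j = {sum_list (map prod_list xss) | xss. \<forall>xs\<in>set xss. length xs = j \<and> set xs \<subseteq> I}"
    using assms(2) by (simp add: ideal_pow_def)
  ultimately show ?thesis by blast
qed

lemma C_finite_order: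
  assumes ex: "\<exists>k>0. gmul k (a::'a::ab_group_add) = 0"
  shows "C a = (\<lambda>k. gmul k a) ` {..<elem_ord a}"
proof
  note E = elem_ord_props[OF ex]
  show "C a \<subseteq> (\<lambda>k. gmul k a) ` {..<elem_ord a}"
  proof
    fix x assume "x \<in> C a"
    then obtain k where "x = gmul k a" unfolding C_def by blast
    then have "x = gmul (k mod elem_ord a) a" using gmul_mod[OF E(2)] by simp
    moreover have "k mod elem_ord a < elem_ord a" using E(1) by simp
    ultimately show "x \<in> (\<lambda>k. gmul k a) ` {..<elem_ord a}" by blast
  qed
qed (auto simp: C_def)

lemma card_C:
  assumes ex: "\<exists>k>0. gmul k (a::'a::ab_group_add) = 0"
  shows "card (C a) = elem_ord a" "finite (C a)"
proof -
  have "inj_on (\<lambda>k. gmul k a) {..<elem_ord a}"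
    using gmul_inj_below[OF ex] unfolding inj_on_def by auto
  then show "card (C a) = elem_ord a" unfolding C_finite_order[OF ex] by (simp add: card_image)
  show "finite (C a)" unfolding C_finite_order[OF ex] by simp
qed

lemma C_minus:
  assumes ex: "\<exists>k>0. gmul k (a::'a::ab_group_add) = 0" and y: "y \<in> C a"
  shows "- y \<in> C a"
proof -
  note E = elem_ord_props[OF ex]
  obtain k where k: "y = gmul k a" using y unfolding C_def by blast
  have "gmul (elem_ord a - 1) a + a = gmul (elem_ord a - 1 + 1) a" by (simp add: gmul_add)
  also have "\<dots> = 0" using E by simp
  finally have "- a = gmul (elem_ord a - 1) a" by (simp add: neg_eq_iff_add_eq_0 add.commute)
  moreover have "- y = gmul k (- a)" using k by (simp add: gmul_minus)
  ultimately have "- y = gmul k (gmul (elem_ord a - 1) a)" by simp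
  also have "\<dots> = gmul (k * (elem_ord a - 1)) a" by (simp add: gmul_mult)
  finally show ?thesis unfolding C_def by blast
qed

lemma lookup_scalar: "Poly_Mapping.lookup (Poly_Mapping.single 0 r * f) b = r * Poly_Mapping.lookup (f :: 'a::ab_group_add \<Rightarrow>\<^sub>0 'r::comm_ring_1) b"
proof -
  have "Poly_Mapping.single 0 r * f = Poly_Mapping.map ((*) r) f" by (simp add: mult_map_scale_conv_mult)
  then show ?thesis by (simp add: Poly_Mapping.map.rep_eq when_def)
qed

lemma finite_order_not_nilpotent:
  assumes ex: "\<exists>k>0. gmul k (a::'a::ab_group_add) = 0" and a0: "a \<noteq> 0"
    and nz: "\<And>n. (of_nat (elem_ord a) :: 'r::comm_ring_1) ^ n \<noteq> 0"
  shows "\<not> nilpotent_ideal (aug_ideal :: ('a \<Rightarrow>\<^sub>0 'r) set)"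
proof (rule not_nilpotent_if)
  define c where "c = elem_ord a"
  have cC: "card (C a) = c" "finite (C a)" using card_C[OF ex] c_def by auto
  define s :: "'a \<Rightarrow>\<^sub>0 'r" where "s = (\<Sum>b\<in>C a. Poly_Mapping.single b 1)"
  have sshift: "s * Poly_Mapping.single d 1 = s" if d: "d \<in> C a" for d
  proof -
    have "s * Poly_Mapping.single d 1 = (\<Sum>b\<in>C a. Poly_Mapping.single (b + d) 1)"
      unfolding s_def by (simp add: sum_distrib_right mult_single)
    also have "\<dots> = (\<Sum>b\<in>(\<lambda>b. b + d) ` C a. Poly_Mapping.single b 1)"
      by (rule sum.reindex[symmetric, unfolded o_def]) (simp add: inj_on_def)
    also have "(\<lambda>b. b + d) ` C a = C a"
    proof
      show "(\<lambda>b. b + d) ` C a \<subseteq> C a" using sg_C[of a] d unfolding sg_def by blast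
      show "C a \<subseteq> (\<lambda>b. b + d) ` C a"
      proof
        fix x assume "x \<in> C a"
        then have "x + - d \<in> C a" using C_minus[OF ex d] sg_C[of a] unfolding sg_def by blast
        moreover have "x = (x + - d) + d" by simp
        ultimately show "x \<in> (\<lambda>b. b + d) ` C a" by blast
      qed
    qed
    finally show ?thesis unfolding s_def .
  qed
  have ss: "s * s = of_nat c * s"
  proof -
    have "s * s = (\<Sum>d\<in>C a. s * Poly_Mapping.single d 1)" by (metis s_def sum_distrib_left)
    also have "\<dots> = (\<Sum>d\<in>C a. s)" by (rule sum.cong) (auto simp: sshift)
    also have "\<dots> = of_nat c * s" using cC by simp
    finally show ?thesis .
  qed
  define x where "x = of_nat c - s"
  have xx: "x * x = of_nat c * x"
    unfolding x_def by (simp add: algebra_simps ss)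
  have xpow: "x ^ Suc n = of_nat c ^ n * x" for n
  proof (induction n)
    case 0 then show ?case by simp
  next
    case (Suc n)
    have "x ^ Suc (Suc n) = (of_nat c ^ n * x) * x" using Suc by (metis power_Suc2)
    also have "\<dots> = of_nat c ^ n * (x * x)" by (simp only: mult.assoc)
    also have "\<dots> = of_nat c ^ Suc n * x" by (simp only: xx mult.assoc[symmetric] power_Suc2)
    finally show ?case .
  qed
  have "augmentation s = (\<Sum>b\<in>C a. 1)" unfolding s_def aug_sum by (simp add: aug_single)
  then have "augmentation s = of_nat c" using cC by simp
  then have xI: "x \<in> aug_ideal" unfolding x_def aug_ideal_def by (simp add: aug_diff aug_of_nat)
  have "a \<in> C a" unfolding C_def by (rule range_eqI[of _ _ 1]) simp
  have "Poly_Mapping.lookup s a = (\<Sum>b\<in>C a. Poly_Mapping.lookup (Poly_Mapping.single b (1::'r)) a)"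
    unfolding s_def by (simp add: lookup_sum)
  also have "\<dots> = (\<Sum>b\<in>{a}. 1)"
    by (rule sum.mono_neutral_cong_right) (use \<open>a \<in> C a\<close> cC in \<open>auto simp: lookup_single when_def\<close>)
  finally have la: "Poly_Mapping.lookup s a = 1" by simp
  have lx: "Poly_Mapping.lookup x a = - 1"
    unfolding x_def using la a0 by (simp add: lookup_minus lookup_of_nat)
  fix n :: nat assume "n > 0"
  then obtain n' where n': "n = Suc n'" by (cases n) auto
  have "of_nat c ^ n' = (Poly_Mapping.single 0 (of_nat c ^ n') :: 'a \<Rightarrow>\<^sub>0 'r)"
    by (metis of_nat_power single_of_nat)
  then have "Poly_Mapping.lookup (x ^ n) a = of_nat c ^ n' * Poly_Mapping.lookup x a"
    unfolding n' xpow by (simp add: lookup_scalar)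
  also have "\<dots> = - (of_nat c ^ n')" using lx by simp
  finally have "x ^ n \<noteq> 0" using nz[of n'] c_def by auto
  then show "\<exists>x\<in>aug_ideal. x ^ n \<noteq> (0 :: 'a \<Rightarrow>\<^sub>0 'r)" using xI by blast
qed



lemma single_minus_one_in_aug: "Poly_Mapping.single g 1 - 1 \<in> (aug_ideal :: ('a::ab_group_add \<Rightarrow>\<^sub>0 'r::comm_ring_1) set)"
  unfolding aug_ideal_def by (simp add: aug_diff aug_single aug_one)

lemma ideal_pow_0_ne: "ideal_pow I 0 \<noteq> {0::'b::comm_ring_1}"
proof
  assume "ideal_pow I 0 = {0::'b}"
  then have "(1::'b) \<in> {0}" by (simp add: ideal_pow_def)
  then show False by simp
qed

lemma part_a:
  assumes "infinite_order (a::'a::ab_group_add)"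
  shows "\<not> nilpotent_ideal (aug_ideal :: ('a \<Rightarrow>\<^sub>0 'r::comm_ring_1) set)"
proof (rule not_nilpotent_if)
  fix n :: nat assume "n > 0"
  have inj: "inj_on (\<lambda>k. gmul k a) {..n}"
  proof (rule inj_onI)
    fix i j assume "gmul i a = gmul j a"
    show "i = j"
    proof (rule ccontr)
      assume "i \<noteq> j"
      then consider "i < j" | "j < i" by linarith
      then show False
      proof cases
        case 1
        then have "gmul (j - i) a = 0" using gmul_cancel_diff[of i j a] \<open>gmul i a = gmul j a\<close> by simp
        then show False using assms 1 unfolding infinite_order_def by simp
      next
        case 2
        then have "gmul (i - j) a = 0" using gmul_cancel_diff[of j i a] \<open>gmul i a = gmul j a\<close> by simp
        then show False using assms 2 unfolding infinite_order_def by simp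
      qed
    qed
  qed
  have "Poly_Mapping.lookup ((Poly_Mapping.single a (1::'r) - 1) ^ n) (gmul n a) = 1"
    using pow_X_minus_1[OF inj, of n, where 'r='r] by simp
  then have "(Poly_Mapping.single a (1::'r) - 1) ^ n \<noteq> 0" by auto
  then show "\<exists>x\<in>aug_ideal. x ^ n \<noteq> (0 :: 'a \<Rightarrow>\<^sub>0 'r)" using single_minus_one_in_aug by blast
qed

lemma part_b:
  assumes "(a::'a::ab_group_add) \<noteq> 0"
  shows "\<not> nilpotent_ideal (aug_ideal :: ('a \<Rightarrow>\<^sub>0 int) set)"
proof (cases "infinite_order a")
  case True
  then show ?thesis by (rule part_a)
next
  case False
  then have ex: "\<exists>k>0. gmul k a = 0" unfolding infinite_order_def by blast
  show ?thesis
  proof (rule finite_order_not_nilpotent[OF ex assms])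
    fix n
    show "(of_nat (elem_ord a) :: int) ^ n \<noteq> 0" using elem_ord_props(1)[OF ex] by simp
  qed
qed

lemma of_nat_mod_ring_ne0:
  assumes "prime p" "p dvd CARD('n::nontriv)" "\<not> p dvd m"
  shows "(of_nat m :: 'n mod_ring) ^ k \<noteq> 0"
proof
  assume "(of_nat m :: 'n mod_ring) ^ k = 0"
  then have "(of_nat (m ^ k) :: 'n mod_ring) = 0" by (simp only: of_nat_power)
  then have "CARD('n) dvd m ^ k" by (simp only: of_nat_eq_0_iff_char_dvd semiring_char_mod_ring)
  then have "p dvd m ^ k" using assms(2) dvd_trans by blast
  then have "p dvd m" using assms(1) prime_dvd_power by blast
  then show False using assms(3) by simp
qed

lemma part_c:
  assumes "2 \<le> m" "prime p" "p dvd CARD('n::nontriv)" "\<not> p dvd m" "elem_ord (a::'a::ab_group_add) = m"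
  shows "nil_index (aug_ideal :: ('a \<Rightarrow>\<^sub>0 'n mod_ring) set) = \<infinity>"
proof -
  have ex: "\<exists>k>0. gmul k a = 0" using assms(1,5) unfolding elem_ord_def by (auto split: if_splits)
  have a0: "a \<noteq> 0" using assms(1,5) elem_ord_zero_iff[of a] by auto
  have "\<not> nilpotent_ideal (aug_ideal :: ('a \<Rightarrow>\<^sub>0 'n mod_ring) set)"
    by (rule finite_order_not_nilpotent[OF ex a0]) (use of_nat_mod_ring_ne0[OF assms(2,3,4)] assms(5) in auto)
  then show ?thesis unfolding nil_index_def by simp
qed

lemma cyc_eq_C:
  assumes fin: "finite (UNIV :: 'a::ab_group_add set)"
  shows "cyc (g::'a) = C g"
proof
  show "C g \<subseteq> cyc g" unfolding C_def cyc_def by blast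
  show "cyc g \<subseteq> C g"
  proof
    fix x assume "x \<in> cyc g"
    then consider k where "x = gmul k g" | k where "x = - gmul k g" unfolding cyc_def by blast
    then show "x \<in> C g"
    proof cases
      case 1 then show ?thesis unfolding C_def by blast
    next
      case 2
      have "gmul k g \<in> C g" unfolding C_def by blast
      then show ?thesis using C_minus[OF ex_order_finite[OF fin]] 2 by blast
    qed
  qed
qed

lemma dsum_direct:
  assumes fin: "finite (UNIV :: 'a::ab_group_add set)" and d: "dsum (UNIV::'a set) k g"
  shows "direct_sum_cyclic TYPE('a) k"
proof -
  have indep: "\<And>x. (\<forall>i<k. x i \<in> C (g i)) \<Longrightarrow> (\<Sum>i<k. x i) = 0 \<Longrightarrow> (\<forall>i<k. x i = 0)"
    using d unfolding dsum_def by blast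
  have span: "\<And>h. \<exists>x. (\<forall>i<k. x i \<in> C (g i)) \<and> h = (\<Sum>i<k. x i)"
    using d unfolding dsum_def by blast
  have "bij_betw (\<lambda>x. \<Sum>i<k. x i) (PiE {..<k} (\<lambda>i. cyc (g i))) (UNIV :: 'a set)"
    unfolding cyc_eq_C[OF fin] bij_betw_def
  proof
    show "inj_on (\<lambda>x. \<Sum>i<k. x i) (PiE {..<k} (\<lambda>i. C (g i)))"
    proof (rule inj_onI)
      fix x y assume x: "x \<in> PiE {..<k} (\<lambda>i. C (g i))" and y: "y \<in> PiE {..<k} (\<lambda>i. C (g i))"
        and eq: "(\<Sum>i<k. x i) = (\<Sum>i<k. y i)"
      define z where "z = (\<lambda>i. x i - y i)"
      have "\<forall>i<k. z i \<in> C (g i)"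
        using x y sg_diff[OF fin sg_C] unfolding z_def by (auto simp: PiE_iff)
      moreover have "(\<Sum>i<k. z i) = 0" unfolding z_def using eq by (simp add: sum_subtractf)
      ultimately have "\<forall>i<k. z i = 0" using indep by blast
      then show "x = y" using x y unfolding z_def by (intro PiE_ext[OF x y]) auto
    qed
    have "h \<in> (\<lambda>x. \<Sum>i<k. x i) ` PiE {..<k} (\<lambda>i. C (g i))" for h
    proof -
      obtain x where x: "\<forall>i<k. x i \<in> C (g i)" "h = (\<Sum>i<k. x i)" using span by blast
      have "restrict x {..<k} \<in> PiE {..<k} (\<lambda>i. C (g i))" using x(1) by auto
      moreover have "(\<Sum>i<k. restrict x {..<k} i) = h" using x(2) by simp
      ultimately show ?thesis by (metis image_eqI)
    qed
    then show "(\<lambda>x. \<Sum>i<k. x i) ` PiE {..<k} (\<lambda>i. C (g i)) = UNIV" by blast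
  qed
  then show ?thesis unfolding direct_sum_cyclic_def by blast
qed

lemma dsum_subset_inj:
  assumes fin: "finite (UNIV :: 'a::ab_group_add set)" and d: "dsum (UNIV::'a set) k g"
  shows "inj_on (\<lambda>S. \<Sum>i\<in>S. g i) (Pow {..<k})"
proof (rule inj_onI)
  have indep: "\<And>x. (\<forall>i<k. x i \<in> C (g i)) \<Longrightarrow> (\<Sum>i<k. x i) = 0 \<Longrightarrow> (\<forall>i<k. x i = 0)"
    using d unfolding dsum_def by blast
  have g0: "\<And>i. i < k \<Longrightarrow> g i \<noteq> 0" using d unfolding dsum_def by blast
  fix S T assume S: "S \<in> Pow {..<k}" and T: "T \<in> Pow {..<k}" and eq: "(\<Sum>i\<in>S. g i) = (\<Sum>i\<in>T. g i)"
  define z where "z = (\<lambda>i. (if i \<in> S then g i else 0) - (if i \<in> T then g i else 0))"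
  have gC: "g i \<in> C (g i)" "0 \<in> C (g i)" for i
    unfolding C_def by (rule range_eqI[of _ _ 1], simp, rule range_eqI[of _ _ 0], simp)
  have "\<forall>i<k. z i \<in> C (g i)"
    unfolding z_def using sg_diff[OF fin sg_C] gC by auto
  moreover have "(\<Sum>i<k. z i) = 0"
  proof -
    have "(\<Sum>i<k. if i \<in> S then g i else 0) = (\<Sum>i\<in>S. g i)"
      using S by (simp add: sum.If_cases Int_absorb1)
    moreover have "(\<Sum>i<k. if i \<in> T then g i else 0) = (\<Sum>i\<in>T. g i)"
      using T by (simp add: sum.If_cases Int_absorb1)
    ultimately show ?thesis unfolding z_def using eq by (simp add: sum_subtractf)
  qed
  ultimately have z0: "\<forall>i<k. z i = 0" using indep by blast
  have "i \<in> S \<longleftrightarrow> i \<in> T" for i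
  proof (cases "i < k")
    case True
    then show ?thesis using z0 g0[OF True] unfolding z_def by (auto split: if_splits)
  next
    case False
    then show ?thesis using S T by auto
  qed
  then show "S = T" by blast
qed


lemma part_d:
  assumes fin: "finite (UNIV :: 'a::ab_group_add set)"
  shows "nil_index (aug_ideal :: ('a \<Rightarrow>\<^sub>0 'r::comm_ring_1) set) \<ge> enat (max (grp_exp TYPE('a)) (grp_rank TYPE('a)))"
proof (cases "nilpotent_ideal (aug_ideal :: ('a \<Rightarrow>\<^sub>0 'r) set)")
  case False
  then show ?thesis unfolding nil_index_def by simp
next
  case True
  let ?I = "aug_ideal :: ('a \<Rightarrow>\<^sub>0 'r) set"
  define L where "L = (LEAST n. ideal_pow ?I n = {0})"
  have nil: "nil_index ?I = enat L" unfolding nil_index_def L_def using True by simp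
  have hL: "ideal_pow ?I L = {0}" unfolding L_def
    using True unfolding nilpotent_ideal_def by (metis (mono_tags, lifting) LeastI_ex)
  have L0: "L > 0" using hL ideal_pow_0_ne by (metis gr0I)
  have sgU: "sg (UNIV :: 'a set)" unfolding sg_def by simp
  have "finite (elem_ord ` (UNIV :: 'a set))" "elem_ord ` (UNIV :: 'a set) \<noteq> {}" using fin by auto
  then have "Max (elem_ord ` (UNIV :: 'a set)) \<in> elem_ord ` (UNIV :: 'a set)" by (rule Max_in)
  then obtain g :: 'a where g: "elem_ord g = Max (elem_ord ` (UNIV :: 'a set))" by auto
  have gmax: "\<And>x::'a. x \<in> UNIV \<Longrightarrow> elem_ord x \<le> elem_ord g"
    using g fin by simp
  have all0: "gmul (elem_ord g) x = 0" for x :: 'a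
    using max_ord_dvd[OF fin sgU _ gmax] fin_ord(3)[OF fin] by blast
  have exp: "grp_exp TYPE('a) = elem_ord g"
    unfolding grp_exp_def
  proof (rule Least_equality)
    show "0 < elem_ord g \<and> (\<forall>a::'a. gmul (elem_ord g) a = 0)" using fin_ord(1)[OF fin] all0 by blast
    fix e assume "0 < e \<and> (\<forall>a::'a. gmul e a = 0)"
    then have "elem_ord g dvd e" using fin_ord(3)[OF fin] by blast
    then show "elem_ord g \<le> e" using \<open>0 < e \<and> _\<close> by (simp add: dvd_imp_le)
  qed
  have Lexp: "elem_ord g \<le> L"
  proof (rule ccontr)
    assume "\<not> elem_ord g \<le> L"
    then have Lm: "L < elem_ord g" by simp
    have inj: "inj_on (\<lambda>k. gmul k g) {..L}"
      using gmul_inj_below[OF ex_order_finite[OF fin]] Lm unfolding inj_on_def by (meson atMost_iff le_less_trans)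
    have "Poly_Mapping.lookup ((Poly_Mapping.single g (1::'r) - 1) ^ L) (gmul L g) = 1"
      using pow_X_minus_1[OF inj, of L, where 'r='r] by simp
    then have "(Poly_Mapping.single g (1::'r) - 1) ^ L \<noteq> 0" by auto
    moreover have "(Poly_Mapping.single g (1::'r) - 1) ^ L \<in> ideal_pow ?I L"
      by (rule pow_in_ideal_pow[OF single_minus_one_in_aug L0])
    ultimately show False using hL by blast
  qed
  obtain k h where d: "dsum (UNIV :: 'a set) k h" using structure_thm[OF fin sgU] by blast
  have rk: "grp_rank TYPE('a) \<le> k" unfolding grp_rank_def by (rule Least_le) (rule dsum_direct[OF fin d])
  have Lk: "k < L"
  proof (rule ccontr)
    assume "\<not> k < L"
    then have "L \<le> k" by simp
    have "Poly_Mapping.lookup (\<Prod>i<L. Poly_Mapping.single (h i) (1::'r) - 1) (\<Sum>i<L. h i) = 1"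
      using prod_X_minus_1[OF dsum_subset_inj[OF fin d] \<open>L \<le> k\<close>, where 'r='r] by simp
    then have "(\<Prod>i<L. Poly_Mapping.single (h i) (1::'r) - 1) \<noteq> 0" by auto
    moreover have "(\<Prod>i<L. Poly_Mapping.single (h i) (1::'r) - 1) \<in> ideal_pow ?I L"
      by (rule prod_in_ideal_pow[OF single_minus_one_in_aug L0])
    ultimately show False using hL by blast
  qed
  show ?thesis unfolding nil exp using Lexp Lk rk by simp
qed


theorem lemma3:
  assumes nontrivial: "\<exists>a::'a::ab_group_add. a \<noteq> 0"
  shows
    "((\<exists>a::'a. infinite_order a) \<longrightarrow> \<not> nilpotent_ideal (aug_ideal :: ('a \<Rightarrow>\<^sub>0 'r::comm_ring_1) set))
     \<and> \<not> nilpotent_ideal (aug_ideal :: ('a \<Rightarrow>\<^sub>0 int) set)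
     \<and> (\<forall>m N::nat. 2 \<le> m \<longrightarrow> 2 \<le> N \<longrightarrow> N = CARD('n::nontriv) \<longrightarrow>
          (\<exists>p::nat. prime p \<and> p dvd N \<and> \<not> p dvd m) \<longrightarrow> (\<exists>a::'a. elem_ord a = m) \<longrightarrow>
          nil_index (aug_ideal :: ('a \<Rightarrow>\<^sub>0 'n mod_ring) set) = \<infinity>)
     \<and> (finite (UNIV :: 'a set) \<longrightarrow>
          nil_index (aug_ideal :: ('a \<Rightarrow>\<^sub>0 'r) set)
            \<ge> enat (max (grp_exp TYPE('a)) (grp_rank TYPE('a))))"
proof -
  obtain a0 :: 'a where a0: "a0 \<noteq> 0" using nontrivial by blast
  have A: "(\<exists>a::'a. infinite_order a) \<longrightarrow> \<not> nilpotent_ideal (aug_ideal :: ('a \<Rightarrow>\<^sub>0 'r::comm_ring_1) set)"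
    using part_a by blast
  have B: "\<not> nilpotent_ideal (aug_ideal :: ('a \<Rightarrow>\<^sub>0 int) set)"
    by (rule part_b[OF a0])
  have C: "\<forall>m N::nat. 2 \<le> m \<longrightarrow> 2 \<le> N \<longrightarrow> N = CARD('n::nontriv) \<longrightarrow>
          (\<exists>p::nat. prime p \<and> p dvd N \<and> \<not> p dvd m) \<longrightarrow> (\<exists>a::'a. elem_ord a = m) \<longrightarrow>
          nil_index (aug_ideal :: ('a \<Rightarrow>\<^sub>0 'n mod_ring) set) = \<infinity>"
  proof (intro allI impI)
    fix m N :: nat
    assume m: "2 \<le> m" and N: "N = CARD('n)" and p: "\<exists>p::nat. prime p \<and> p dvd N \<and> \<not> p dvd m"
      and a: "\<exists>a::'a. elem_ord a = m"
    from p obtain p where p: "prime p" "p dvd CARD('n)" "\<not> p dvd m" using N by blast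
    from a obtain a :: 'a where "elem_ord a = m" by blast
    show "nil_index (aug_ideal :: ('a \<Rightarrow>\<^sub>0 'n mod_ring) set) = \<infinity>"
      by (rule part_c[OF m p \<open>elem_ord a = m\<close>])
  qed
  have D: "finite (UNIV :: 'a set) \<longrightarrow>
          nil_index (aug_ideal :: ('a \<Rightarrow>\<^sub>0 'r) set) \<ge> enat (max (grp_exp TYPE('a)) (grp_rank TYPE('a)))"
    using part_d by blast
  show ?thesis using A B C D by blast
qed

end
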